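(* Let $k\geq 2$ be an integer, and for $n\ge 1$ let $P_{n,k}=B_k(n)/k^n$ be the probability that a uniformly random length-$n$ word over $\Sigma_k$ has a unique border, where $B_k(n)$ is the number of length-$n$ words over $\Sigma_k$ with a unique border. Then the limit $P_k=\lim_{n\to\infty}P_{n,k}$ exists.
   Context: $\Sigma_k=\{0,1,\ldots,k-1\}$. A border of a word $w$ is a non-empty word that is both a proper prefix and a proper suffix of $w$. A word has a unique border if it has exactly one border. *)

theory Defs
  imports Complex_Main "HOL-Library.Sublist"
begin

definition words :: "nat \<Rightarrow> nat \<Rightarrow> nat list set" where
  "words k n = {w. length w = n \<and> set w \<subseteq> {0..<k}}"

definition borders :: "'a list \<Rightarrow> 'a list set" where
  "borders w = {u. u \<noteq> [] \<and> strict_prefix u w \<and> strict_suffix u w}"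

definition has_unique_border :: "'a list \<Rightarrow> bool" where
  "has_unique_border w \<longleftrightarrow> card (borders w) = 1"

definition B :: "nat \<Rightarrow> nat \<Rightarrow> nat" where
  "B k n = card {w \<in> words k n. has_unique_border w}"

definition P :: "nat \<Rightarrow> nat \<Rightarrow> real" where
  "P n k = real (B k n) / real k ^ n"

end

theory Submission imports Defs begin

definition BL :: "'a list \<Rightarrow> nat set" where
  "BL w = {m \<in> {1..<length w}. take m w = drop (length w - m) w}"

lemma spref: "strict_prefix u w \<longleftrightarrow> length u < length w \<and> u = take (length u) w"
  by (auto simp: strict_prefix_def prefix_def) (metis append_take_drop_id)

lemma ssuf: "strict_suffix u w \<longleftrightarrow> length u < length w \<and> u = drop (length w - length u) w"
  by (auto simp: strict_suffix_def suffix_def) (metis append_take_drop_id)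

lemma borders_BL: "borders w = (\<lambda>m. take m w) ` BL w"
  apply (auto simp: borders_def BL_def spref ssuf image_iff)
  apply (rule_tac x="length x" in exI)
  apply (auto simp: Suc_le_eq)
  done

lemma card_borders: "card (borders w) = card (BL w)"
proof -
  have "inj_on (\<lambda>m. take m w) (BL w)"
    by (rule inj_onI) (auto simp: BL_def dest: arg_cong[where f=length])
  then show ?thesis by (simp add: borders_BL card_image)
qed

lemma card_words: "card (words k n) = k ^ n"
proof -
  have "words k n = {xs. set xs \<subseteq> {0..<k} \<and> length xs = n}" by (auto simp: words_def)
  then show ?thesis by (simp add: card_lists_length_eq)
qed

lemma finite_words: "finite (words k n)"
proof -
  have "words k n = {xs. set xs \<subseteq> {0..<k} \<and> length xs = n}" by (auto simp: words_def)
  then show ?thesis by (simp add: finite_lists_length_eq)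
qed


lemma per_nth:
  assumes "length w = p + m" "take m w = drop p w" "p \<le> i" "i < p + m"
  shows "w ! i = w ! (i - p)"
proof -
  have "w ! i = drop p w ! (i - p)" using assms by simp
  also have "\<dots> = take m w ! (i - p)" using assms(2) by simp
  also have "\<dots> = w ! (i - p)" using assms by (intro nth_take) linarith
  finally show ?thesis .
qed

lemma per_inj:
  assumes "length w1 = p + m" "length w2 = p + m" and p0: "p > 0" and "take p w1 = take p w2"
    "take m w1 = drop p w1" "take m w2 = drop p w2"
  shows "w1 = w2"
proof -
  have "\<forall>i. i < p + m \<longrightarrow> w1 ! i = w2 ! i"
  proof (rule allI)
    fix i show "i < p + m \<longrightarrow> w1 ! i = w2 ! i"
    proof (induction i rule: less_induct)
      case (less i)
      show ?case
      proof (cases "i < p")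
        case True
        then have "w1 ! i = take p w1 ! i" "w2 ! i = take p w2 ! i" by simp_all
        then show ?thesis using assms(4) by simp
      next
        case False
          show ?thesis
          proof
            assume i: "i < p + m"
            have "w1 ! i = w1 ! (i - p)" using per_nth[OF assms(1) assms(5)] False i by simp
            moreover have "w2 ! i = w2 ! (i - p)" using per_nth[OF assms(2) assms(6)] False i by simp
            moreover have "w1 ! (i - p) = w2 ! (i - p)" using less.IH[of "i - p"] p0 i False by simp
            ultimately show "w1 ! i = w2 ! i" by simp
          qed
      qed
    qed
  qed
  then show ?thesis using assms by (simp add: list_eq_iff_nth_eq)
qed

lemma per_card:
  assumes "m < n"
  shows "card {w \<in> words k n. take m w = drop (n - m) w} \<le> k ^ (n - m)"
proof -
  let ?S = "{w \<in> words k n. take m w = drop (n - m) w}"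
  have "inj_on (take (n - m)) ?S"
  proof (rule inj_onI)
    fix w1 w2 assume "w1 \<in> ?S" "w2 \<in> ?S" "take (n - m) w1 = take (n - m) w2"
    then show "w1 = w2" using per_inj[of w1 "n - m" m w2] assms by (auto simp: words_def)
  qed
  moreover have "take (n - m) ` ?S \<subseteq> words k (n - m)"
    by (auto simp: words_def dest: in_set_takeD)
  ultimately have "card ?S \<le> card (words k (n - m))"
    using card_inj_on_le finite_words by blast
  then show ?thesis by (simp add: card_words)
qed


definition Dset :: "nat \<Rightarrow> nat \<Rightarrow> nat \<Rightarrow> nat list set" where
  "Dset k L n = {w \<in> words k n. \<exists>m\<in>{L..<n}. take m w = drop (n - m) w}"

lemma D_card: "card (Dset k L n) \<le> (\<Sum>m\<in>{L..<n}. k ^ (n - m))"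
proof -
  have "Dset k L n = (\<Union>m\<in>{L..<n}. {w \<in> words k n. take m w = drop (n - m) w})"
    by (auto simp: Dset_def)
  then have "card (Dset k L n) \<le> (\<Sum>m\<in>{L..<n}. card {w \<in> words k n. take m w = drop (n - m) w})"
    by (simp add: card_UN_le)
  also have "\<dots> \<le> (\<Sum>m\<in>{L..<n}. k ^ (n - m))"
    by (rule sum_mono) (simp add: per_card)
  finally show ?thesis .
qed

lemma D_bound:
  assumes k: "k \<ge> 2"
  shows "real (card (Dset k L n)) / real k ^ n \<le> 2 * (1 / real k) ^ L"
proof -
  define x where "x = 1 / real k"
  have x0: "0 < x" and x1: "x \<le> 1/2" using k by (auto simp: x_def field_simps)
  have "real (card (Dset k L n)) \<le> (\<Sum>m\<in>{L..<n}. real k ^ (n - m))"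
  proof -
    have "real (card (Dset k L n)) \<le> real (\<Sum>m\<in>{L..<n}. k ^ (n - m))"
      using D_card[of k L n] by (simp only: of_nat_le_iff)
    then show ?thesis by simp
  qed
  then have "real (card (Dset k L n)) / real k ^ n \<le> (\<Sum>m\<in>{L..<n}. real k ^ (n - m)) / real k ^ n"
    using k by (simp add: divide_right_mono)
  also have "\<dots> = (\<Sum>m\<in>{L..<n}. x ^ m)"
    unfolding sum_divide_distrib
  proof (rule sum.cong)
    fix m assume "m \<in> {L..<n}"
    then have "m \<le> n" by simp
    then show "real k ^ (n - m) / real k ^ n = x ^ m"
      using k by (simp add: power_diff x_def power_one_over)
  qed simp
  also have "\<dots> \<le> (\<Sum>m\<in>{L..n}. x ^ m)"
    by (rule sum_mono2) (use x0 in auto)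
  also have "\<dots> \<le> 2 * x ^ L"
  proof (cases "n < L")
    case True then show ?thesis using x0 by (simp add: sum_gp)
  next
    case False
    then have "(\<Sum>m\<in>{L..n}. x ^ m) = (x ^ L - x ^ Suc n) / (1 - x)"
      using x1 by (simp add: sum_gp)
    also have "\<dots> \<le> x ^ L / (1 - x)"
      using x0 x1 by (intro divide_right_mono) auto
    also have "\<dots> \<le> x ^ L / (1/2)"
      using x0 x1 by (intro divide_left_mono) auto
    also have "\<dots> = 2 * x ^ L" by simp
    finally show ?thesis .
  qed
  finally show ?thesis by (simp add: x_def)
qed


definition SB :: "nat \<Rightarrow> nat list \<Rightarrow> nat set" where
  "SB L w = {m \<in> {1..<L}. take m w = drop (length w - m) w}"
definition SB2 :: "nat \<Rightarrow> nat list \<Rightarrow> nat list \<Rightarrow> nat set" where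
  "SB2 L x y = {m \<in> {1..<L}. take m x = drop (L - m) y}"
definition Cset :: "nat \<Rightarrow> nat \<Rightarrow> nat \<Rightarrow> nat list set" where
  "Cset k L n = {w \<in> words k n. card (SB L w) = 1}"
definition QS :: "nat \<Rightarrow> nat \<Rightarrow> (nat list \<times> nat list) set" where
  "QS k L = {(x,y). x \<in> words k L \<and> y \<in> words k L \<and> card (SB2 L x y) = 1}"

lemma SB_eq:
  assumes "length w = n" "2 * L \<le> n"
  shows "SB L w = SB2 L (take L w) (drop (n - L) w)"
proof -
  have "take m (take L w) = take m w \<and> drop (L - m) (drop (n - L) w) = drop (n - m) w"
    if "m < L" for m
  proof -
    have "L - m + (n - L) = n - m" using that assms by linarith
    then show ?thesis using that by (simp add: min_def)
  qed
  then show ?thesis using assms unfolding SB_def SB2_def by auto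
qed

lemma C_count:
  assumes "2 * L \<le> n"
  shows "card (Cset k L n) = card (QS k L) * k ^ (n - 2 * L)"
proof -
  define f where "f = (\<lambda>((x::nat list, y::nat list), z::nat list). x @ z @ y)"
  have inj: "inj_on f (QS k L \<times> words k (n - 2 * L))"
  proof (rule inj_onI)
    fix a b assume a: "a \<in> QS k L \<times> words k (n - 2 * L)" and b: "b \<in> QS k L \<times> words k (n - 2 * L)"
      and e: "f a = f b"
    obtain x y z where axyz: "a = ((x, y), z)" by (metis prod.collapse)
    obtain x' y' z' where bxyz: "b = ((x', y'), z')" by (metis prod.collapse)
    have l: "length x = L" "length x' = L" "length z = n - 2 * L" "length z' = n - 2 * L"
      using a b axyz bxyz by (auto simp: QS_def words_def)
    have "x @ z @ y = x' @ z' @ y'" using e axyz bxyz by (simp add: f_def)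
    then have "x = x' \<and> z @ y = z' @ y'" using l by (simp add: append_eq_append_conv)
    then have "x = x' \<and> z = z' \<and> y = y'" using l by (simp add: append_eq_append_conv)
    then show "a = b" using axyz bxyz by simp
  qed
  have img: "f ` (QS k L \<times> words k (n - 2 * L)) = Cset k L n"
  proof
    show "f ` (QS k L \<times> words k (n - 2 * L)) \<subseteq> Cset k L n"
    proof
      fix w assume "w \<in> f ` (QS k L \<times> words k (n - 2 * L))"
      then obtain x y z where xyz: "(x, y) \<in> QS k L" "z \<in> words k (n - 2 * L)" "w = x @ z @ y"
        by (auto simp: f_def)
      have l: "length x = L" "length y = L" "length z = n - 2 * L"
        using xyz by (auto simp: QS_def words_def)
      have lw: "length w = n" using l xyz assms by simp
      have "take L w = x" using l xyz by simp
      moreover have "drop (n - L) w = y"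
      proof -
        have "n - L = length (x @ z)" using l assms by simp
        then show ?thesis using xyz by simp
      qed
      ultimately have "SB L w = SB2 L x y" using SB_eq[OF lw assms] by simp
      moreover have "w \<in> words k n" using xyz lw by (auto simp: words_def QS_def)
      ultimately show "w \<in> Cset k L n" using xyz by (simp add: Cset_def QS_def)
    qed
  next
    show "Cset k L n \<subseteq> f ` (QS k L \<times> words k (n - 2 * L))"
    proof
      fix w assume w: "w \<in> Cset k L n"
      then have lw: "length w = n" and sw: "set w \<subseteq> {0..<k}" by (auto simp: Cset_def words_def)
      define x where "x = take L w"
      define y where "y = drop (n - L) w"
      define z where "z = take (n - 2 * L) (drop L w)"
      have dd: "drop (n - L) w = drop (n - 2 * L) (drop L w)"
      proof -
        have "n - 2 * L + L = n - L" using assms by linarith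
        then show ?thesis by simp
      qed
      have "w = x @ z @ y" unfolding x_def y_def z_def dd append_take_drop_id by (rule refl)
      moreover have "(x, y) \<in> QS k L"
        using w SB_eq[OF lw assms] lw sw assms
        by (auto simp: Cset_def QS_def words_def x_def y_def dest: in_set_takeD in_set_dropD)
      moreover have "z \<in> words k (n - 2 * L)"
        using lw sw assms by (auto simp: words_def z_def dest!: in_set_takeD in_set_dropD)
      ultimately show "w \<in> f ` (QS k L \<times> words k (n - 2 * L))"
        unfolding f_def by (intro image_eqI[where x="((x, y), z)"]) auto
    qed
  qed
  have "card (Cset k L n) = card (QS k L \<times> words k (n - 2 * L))"
    using card_image[OF inj] img by simp
  also have "\<dots> = card (QS k L) * k ^ (n - 2 * L)"
    by (simp add: card_cartesian_product card_words)
  finally show ?thesis .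
qed


lemma BL_SB:
  assumes "w \<in> words k n" "w \<notin> Dset k L n" "L \<le> n"
  shows "BL w = SB L w"
  using assms by (auto simp: BL_def SB_def Dset_def words_def)

lemma approx:
  assumes k: "k \<ge> 2" and n: "2 * L \<le> n"
  shows "\<bar>P n k - real (card (QS k L)) / real k ^ (2 * L)\<bar> \<le> 2 * (1 / real k) ^ L"
proof -
  define A where "A = {w \<in> words k n. has_unique_border w}"
  have fin: "finite (words k n)" by (rule finite_words)
  have hu: "has_unique_border w \<longleftrightarrow> card (BL w) = 1" for w :: "nat list"
    by (simp add: has_unique_border_def card_borders)
  have Ln: "L \<le> n" using n by simp
  have AC: "A \<subseteq> Cset k L n \<union> Dset k L n"
  proof
    fix w assume w: "w \<in> A"
    show "w \<in> Cset k L n \<union> Dset k L n"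
    proof (cases "w \<in> Dset k L n")
      case False
      then have "BL w = SB L w" using BL_SB[of w k n L] w Ln by (simp add: A_def)
      then show ?thesis using w by (simp add: A_def Cset_def hu)
    qed simp
  qed
  have CA: "Cset k L n \<subseteq> A \<union> Dset k L n"
  proof
    fix w assume w: "w \<in> Cset k L n"
    show "w \<in> A \<union> Dset k L n"
    proof (cases "w \<in> Dset k L n")
      case False
      then have "BL w = SB L w" using BL_SB[of w k n L] w Ln by (simp add: Cset_def)
      then show ?thesis using w by (simp add: A_def Cset_def hu)
    qed simp
  qed
  have fC: "finite (Cset k L n)" and fD: "finite (Dset k L n)" and fA: "finite A"
    using fin by (auto simp: Cset_def Dset_def A_def)
  have "card A \<le> card (Cset k L n \<union> Dset k L n)" using AC fC fD by (intro card_mono) auto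
  also have "\<dots> \<le> card (Cset k L n) + card (Dset k L n)" by (rule card_Un_le)
  finally have i1: "real (card A) \<le> real (card (Cset k L n)) + real (card (Dset k L n))" by linarith
  have "card (Cset k L n) \<le> card (A \<union> Dset k L n)" using CA fA fD by (intro card_mono) auto
  also have "\<dots> \<le> card A + card (Dset k L n)" by (rule card_Un_le)
  finally have i2: "real (card (Cset k L n)) \<le> real (card A) + real (card (Dset k L n))" by linarith
  have kp: "real k ^ n > 0" using k by simp
  have PA: "P n k = real (card A) / real k ^ n" by (simp add: P_def B_def A_def)
  have PC: "real (card (QS k L)) / real k ^ (2 * L) = real (card (Cset k L n)) / real k ^ n"
  proof -
    have "real (card (Cset k L n)) / real k ^ n = real (card (QS k L)) * (real k ^ (n - 2 * L) / real k ^ n)"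
      using C_count[OF n, of k] by simp
    also have "real k ^ (n - 2 * L) / real k ^ n = 1 / real k ^ (2 * L)"
      using k n by (simp add: power_diff)
    finally show ?thesis by simp
  qed
  have "\<bar>real (card A) - real (card (Cset k L n))\<bar> \<le> real (card (Dset k L n))" using i1 i2 by linarith
  then have "\<bar>real (card A) - real (card (Cset k L n))\<bar> / real k ^ n \<le> real (card (Dset k L n)) / real k ^ n"
    using kp by (simp add: divide_right_mono)
  also have "\<dots> \<le> 2 * (1 / real k) ^ L" by (rule D_bound[OF k])
  finally have fin2: "\<bar>real (card A) - real (card (Cset k L n))\<bar> / real k ^ n \<le> 2 * (1 / real k) ^ L" .
  have "\<bar>real (card A) - real (card (Cset k L n))\<bar> / real k ^ n = \<bar>real (card A) / real k ^ n - real (card (Cset k L n)) / real k ^ n\<bar>"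
    using kp by (simp add: diff_divide_distrib abs_div_pos)
  then show ?thesis unfolding PA PC using fin2 by simp
qed

theorem theorem12:
  fixes k :: nat
  assumes "k \<ge> 2"
  shows "convergent (\<lambda>n. P n k)"
proof -
  define x where "x = 1 / real k"
  have x0: "0 < x" and x1: "x < 1" using assms by (auto simp: x_def)
  have "Cauchy (\<lambda>n. P n k)"
  proof (rule CauchyI)
    fix e :: real assume e: "0 < e"
    obtain L where L: "x ^ L < e / 4" using real_arch_pow_inv[of "e/4" x] e x1 by auto
    define c where "c = real (card (QS k L)) / real k ^ (2 * L)"
    have "\<forall>m\<ge>2 * L. \<forall>n\<ge>2 * L. norm (P m k - P n k) < e"
    proof (intro allI impI)
      fix m n assume m: "2 * L \<le> m" and n: "2 * L \<le> n"
      have "\<bar>P m k - c\<bar> \<le> 2 * x ^ L" using approx[OF assms m] by (simp add: c_def x_def)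
      moreover have "\<bar>P n k - c\<bar> \<le> 2 * x ^ L" using approx[OF assms n] by (simp add: c_def x_def)
      ultimately show "norm (P m k - P n k) < e" using L by simp
    qed
    then show "\<exists>M. \<forall>m\<ge>M. \<forall>n\<ge>M. norm (P m k - P n k) < e" by blast
  qed
  then show ?thesis by (simp add: Cauchy_convergent_iff)
qed

end
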